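(* Let $d\ge2$ and let $\mathscr{D}_d$ be the distribution on $\mathcal{X}_d\times[-1,1]$ given by $\mathbf{x}\sim\mathrm{Unif}(\mathcal{X}_d)$, $y\mid\mathbf{x}=f_d(\mathbf{x})$, for some $f_d:\mathcal{X}_d\to[-1,1]$. Let $\delta>0$ and let $S=\{(\mathbf{x}_i,y_i)\}_{i=1}^m$ be drawn i.i.d. from $\mathscr{D}_d$. Then with probability at least $1-\delta$ there exists $\hat f\in\mathcal{N}_2$ interpolating $S$ (i.e. $\hat f(\mathbf{x}_i)=y_i$ for all $i$) with $R_2(\hat f)\le16\sqrt2\,|S|^{\frac{d+3}{d-1}}\delta^{-\frac{2}{d-1}}$.
   Context: $\mathcal{X}_d=\mathbb{S}^{d-1}\times\mathbb{S}^{d-1}\subset\mathbb{R}^{2d}$. $\mathcal{N}_2$ is the set of depth-two ReLU networks $f_\phi(\mathbf{x})=\sum_k a_k[\mathbf{w}_k^\top\mathbf{x}+b_k]_++c$ of arbitrary finite width, and $R_2(f)=\inf\{\|\phi\|^2/2:f_\phi=f\text{ on }\mathcal{X}_d\}$ with $\|\phi\|^2$ the sum of squares of all parameters. *)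

theory Defs
  imports "HOL-Probability.Probability"
begin

type_synonym 'n point = "(real^'n) \<times> (real^'n)"

text \<open>The input domain X_d = S^{d-1} x S^{d-1}, with d = CARD('n).\<close>
definition Xd :: "'n::finite point set" where
  "Xd = {(u, v). norm u = 1 \<and> norm v = 1}"

text \<open>Normalised (uniform) surface measure on the unit sphere S^{d-1}, defined as the
  cone measure: sigma(A) = vol{t x : x in A, 0 <= t <= 1} / vol(unit ball), i.e. the
  push-forward of the uniform distribution on the unit ball under x |-> x / |x|.\<close>
definition unif_sphere :: "(real^'n::finite) measure" where
  "unif_sphere = distr (uniform_measure lborel (cball 0 1)) borel (\<lambda>x. x /\<^sub>R norm x)"

definition unif_Xd :: "'n::finite point measure" where
  "unif_Xd = unif_sphere \<Otimes>\<^sub>M unif_sphere"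

type_synonym 'n params = "(real \<times> 'n point \<times> real) list \<times> real"

definition relu :: "real \<Rightarrow> real" where
  "relu t = max t 0"

definition netfun :: "'n::finite params \<Rightarrow> 'n point \<Rightarrow> real" where
  "netfun \<phi> x = (\<Sum>(a, w, b) \<leftarrow> fst \<phi>. a * relu (inner w x + b)) + snd \<phi>"

definition param_sqnorm :: "'n::finite params \<Rightarrow> real" where
  "param_sqnorm \<phi> = (\<Sum>(a, w, b) \<leftarrow> fst \<phi>. a\<^sup>2 + (norm w)\<^sup>2 + b\<^sup>2) + (snd \<phi>)\<^sup>2"

definition N2 :: "('n::finite point \<Rightarrow> real) set" where
  "N2 = {f. \<exists>\<phi>. f = netfun \<phi>}"

definition R2 :: "('n::finite point \<Rightarrow> real) \<Rightarrow> real" where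
  "R2 f = Inf {param_sqnorm \<phi> / 2 | \<phi>. \<forall>x\<in>Xd. netfun \<phi> x = f x}"

end

theory Submission
  imports Defs
begin

lemma scale_meas:
  fixes C :: "(real^'n::finite) set" and c :: real
  assumes "c > 0" and [measurable]: "C \<in> sets lborel"
  shows "emeasure lborel ((\<lambda>x. c *\<^sub>R x) -` C) * ennreal (c ^ CARD('n)) = emeasure lborel C"
proof -
  have "emeasure lborel C = emeasure (density (distr lborel borel (\<lambda>x. 0 + c *\<^sub>R x)) (\<lambda>_. \<bar>c\<bar>^DIM(real^'n))) C"
    using lborel_affine[of c 0] assms(1) by (metis less_irrefl)
  also have "\<dots> = ennreal (c ^ CARD('n)) * emeasure lborel ((\<lambda>x. c *\<^sub>R x) -` C)"
    using assms by (simp add: emeasure_density nn_integral_cmult_indicator emeasure_distr)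
  finally show ?thesis by (simp add: mult.commute)
qed

lemma measure_cball_cart:
  fixes c :: "real^'n::finite"
  assumes "r \<ge> 0"
  shows "measure lborel (cball c r) = unit_ball_vol (CARD('n)) * r ^ CARD('n)"
  using emeasure_cball[OF assms, of c] assms
  by (simp add: measure_def)

lemma cap_lborel:
  fixes u0 :: "real^'n::finite"
  assumes r: "0 < r" "r < 1"
  defines "C \<equiv> {z. dist (z /\<^sub>R norm z) u0 < r} \<inter> cball 0 1"
  shows "measure lborel C \<le> unit_ball_vol (CARD('n)) * 2 ^ CARD('n) * r ^ (CARD('n) - 1)"
proof -
  let ?d = "CARD('n)"
  define C' where "C' = {z. dist (z /\<^sub>R norm z) u0 < r} \<inter> cball (0::real^'n) (1 - r)"
  have mC[measurable]: "C \<in> sets lborel" unfolding C_def by measurable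
  have mC'[measurable]: "C' \<in> sets lborel" unfolding C'_def by measurable
  have pre: "(\<lambda>x. (1 - r) *\<^sub>R x) -` C' = C"
  proof -
    have "((1 - r) *\<^sub>R x) /\<^sub>R norm ((1 - r) *\<^sub>R x) = x /\<^sub>R norm x" for x :: "real^'n"
      using r by (cases "x = 0") auto
    moreover have "norm ((1 - r) *\<^sub>R x) \<le> 1 - r \<longleftrightarrow> norm x \<le> 1" for x :: "real^'n"
      using r by (simp add: mult_le_cancel_right1)
    ultimately show ?thesis unfolding C_def C'_def by (auto simp del: norm_scaleR scaleR_scaleR)
  qed
  have e1: "emeasure lborel C' = emeasure lborel C * ennreal ((1 - r) ^ ?d)"
    using scale_meas[of "1 - r" C', OF _ mC'] r pre by simp
  have finC: "emeasure lborel C < \<infinity>"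
    using emeasure_mono[of C "cball 0 1" lborel] emeasure_lborel_cball_finite[of "0::real^'n" 1]
    unfolding C_def by (auto simp: less_le_trans)
  have sub: "C \<subseteq> C' \<union> cball u0 (2 * r)"
  proof
    fix z assume z: "z \<in> C"
    show "z \<in> C' \<union> cball u0 (2 * r)"
    proof (cases "norm z \<le> 1 - r")
      case True then show ?thesis using z unfolding C_def C'_def by auto
    next
      case False
      then have nz: "z \<noteq> 0" "norm z > 1 - r" using r by auto
      have "norm (z - z /\<^sub>R norm z) = 1 - norm z"
      proof -
        have "z - z /\<^sub>R norm z = (1 - 1 / norm z) *\<^sub>R z" by (simp add: algebra_simps divide_inverse)
        then have "norm (z - z /\<^sub>R norm z) = \<bar>1 - 1 / norm z\<bar> * norm z" by simp
        also have "\<dots> = 1 - norm z"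
          using z nz unfolding C_def by (auto simp: abs_if field_simps)
        finally show ?thesis .
      qed
      moreover have "dist (z /\<^sub>R norm z) u0 < r" using z unfolding C_def by auto
      ultimately have "dist z u0 \<le> 2 * r"
        using nz dist_triangle[of z u0 "z /\<^sub>R norm z"] by (simp add: dist_norm)
      then show ?thesis by (simp add: dist_commute)
    qed
  qed
  have "emeasure lborel C \<le> emeasure lborel (C' \<union> cball u0 (2 * r))"
    by (rule emeasure_mono[OF sub]) (use mC' in simp)
  also have "\<dots> \<le> emeasure lborel C' + emeasure lborel (cball u0 (2 * r))"
    by (rule emeasure_subadditive) (use mC' in auto)
  finally have le: "emeasure lborel C \<le> emeasure lborel C * ennreal ((1 - r) ^ ?d) + emeasure lborel (cball u0 (2 * r))"
    using e1 by simp
  define mc where "mc = measure lborel C"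
  have mc0: "mc \<ge> 0" unfolding mc_def by simp
  have "emeasure lborel C = ennreal mc" unfolding mc_def using finC
    by (simp add: emeasure_eq_ennreal_measure less_top)
  moreover have "emeasure lborel (cball u0 (2 * r)) = ennreal (unit_ball_vol ?d * (2 * r) ^ ?d)"
    using emeasure_cball[of "2 * r" u0] r by simp
  ultimately have "ennreal mc \<le> ennreal mc * ennreal ((1 - r) ^ ?d) + ennreal (unit_ball_vol ?d * (2 * r) ^ ?d)"
    using le by simp
  also have "\<dots> = ennreal (mc * (1 - r) ^ ?d + unit_ball_vol ?d * (2 * r) ^ ?d)"
    using r mc0 by (subst ennreal_plus) (auto simp del: ennreal_plus simp: ennreal_mult[symmetric] ennreal_mult'[symmetric])
  finally have le2: "mc \<le> mc * (1 - r) ^ ?d + unit_ball_vol ?d * (2 * r) ^ ?d"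
    using r mc0 by (subst (asm) ennreal_le_iff) (auto intro!: add_nonneg_nonneg mult_nonneg_nonneg)
  have d1: "?d \<ge> 1" by (simp add: Suc_le_eq)
  have "(1 - r) ^ ?d \<le> (1 - r) ^ 1"
    using r d1 by (intro power_decreasing) auto
  then have "mc * r \<le> mc * (1 - (1 - r) ^ ?d)" using mc0 by (intro mult_left_mono) auto
  also have "\<dots> \<le> unit_ball_vol ?d * (2 * r) ^ ?d" using le2 by (simp add: algebra_simps)
  also have "\<dots> = (unit_ball_vol ?d * 2 ^ ?d * r ^ (?d - 1)) * r"
    using d1 by (simp add: power_mult_distrib) (metis One_nat_def Suc_pred mult.commute power_Suc zero_less_card_finite)
  finally show ?thesis using r unfolding mc_def[symmetric] by simp
qed


lemma unif_sphere_sets[simp]: "sets (unif_sphere :: (real^'n::finite) measure) = sets borel"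
  unfolding unif_sphere_def by simp

lemma unif_sphere_space[simp]: "space (unif_sphere :: (real^'n::finite) measure) = UNIV"
  unfolding unif_sphere_def by simp

lemma ball_vol_pos: "0 < emeasure lborel (cball (0::real^'n::finite) 1)"
  using emeasure_cball[of 1 "0::real^'n"] by simp

lemma emeasure_unif_sphere:
  fixes B :: "(real^'n::finite) set"
  assumes [measurable]: "B \<in> sets borel"
  shows "emeasure unif_sphere B =
    emeasure lborel ({z. z /\<^sub>R norm z \<in> B} \<inter> cball 0 1) / emeasure lborel (cball (0::real^'n) 1)"
proof -
  have meas[measurable]: "(\<lambda>x::real^'n. x /\<^sub>R norm x) \<in> borel \<rightarrow>\<^sub>M borel" by measurable
  have pb: "(\<lambda>x::real^'n. x /\<^sub>R norm x) -` B \<in> sets borel"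
    using measurable_sets_borel[OF meas assms] .
  have "emeasure unif_sphere B = emeasure (uniform_measure lborel (cball (0::real^'n) 1)) ((\<lambda>x. x /\<^sub>R norm x) -` B)"
    unfolding unif_sphere_def by (subst emeasure_distr) auto
  also have "\<dots> = emeasure lborel (cball 0 1 \<inter> (\<lambda>x. x /\<^sub>R norm x) -` B) / emeasure lborel (cball (0::real^'n) 1)"
    by (subst emeasure_uniform_measure) (auto simp: pb)
  finally show ?thesis by (simp add: Int_commute vimage_def)
qed

lemma prob_space_unif_sphere: "prob_space (unif_sphere :: (real^'n::finite) measure)"
  unfolding unif_sphere_def
  by (intro prob_space.prob_space_distr prob_space_uniform_measure)
     (use ball_vol_pos[where 'n='n] emeasure_lborel_cball_finite[of "0::real^'n" 1] in auto)

lemma cap_sphere: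
  fixes u0 :: "real^'n::finite"
  assumes r: "0 < r" "r < 1"
  shows "emeasure unif_sphere (ball u0 r) \<le> ennreal (2 ^ CARD('n) * r ^ (CARD('n) - 1))"
proof -
  let ?d = "CARD('n)"
  have V: "emeasure lborel (cball (0::real^'n) 1) = ennreal (unit_ball_vol ?d)"
    using emeasure_cball[of 1 "0::real^'n"] by simp
  have Vp: "unit_ball_vol ?d > 0" by simp
  have eq: "{z. z /\<^sub>R norm z \<in> ball u0 r} \<inter> cball 0 1 = {z. dist (z /\<^sub>R norm z) u0 < r} \<inter> cball (0::real^'n) 1"
    by (auto simp: dist_commute)
  have fin: "emeasure lborel ({z. dist (z /\<^sub>R norm z) u0 < r} \<inter> cball (0::real^'n) 1) = 
     ennreal (measure lborel ({z. dist (z /\<^sub>R norm z) u0 < r} \<inter> cball (0::real^'n) 1))"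
    by (rule emeasure_eq_ennreal_measure)
       (metis (no_types, lifting) emeasure_lborel_cball_finite emeasure_mono inf_le2 infinity_ennreal_def
         neq_top_trans order_less_imp_not_eq2 sets_lborel borel_closed closed_cball)
  have "emeasure unif_sphere (ball u0 r) = ennreal (measure lborel ({z. dist (z /\<^sub>R norm z) u0 < r} \<inter> cball (0::real^'n) 1)) / ennreal (unit_ball_vol ?d)"
    using emeasure_unif_sphere[of "ball u0 r"] unfolding eq fin V by simp
  also have "\<dots> = ennreal (measure lborel ({z. dist (z /\<^sub>R norm z) u0 < r} \<inter> cball (0::real^'n) 1) / unit_ball_vol ?d)"
    using Vp by (simp add: divide_ennreal)
  also have "\<dots> \<le> ennreal (2 ^ ?d * r ^ (?d - 1))"
    using cap_lborel[OF r, of u0] Vp by (intro ennreal_leI) (simp add: divide_le_eq mult_ac)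
  finally show ?thesis .
qed

lemma unif_sphere_null:
  "emeasure (unif_sphere :: (real^'n::finite) measure) {u. norm u \<noteq> 1} = 0"
proof -
  have sub0: "{z. z /\<^sub>R norm z \<in> {u. norm u \<noteq> 1}} \<inter> cball 0 1 \<subseteq> cball (0::real^'n) 0"
    by clarsimp (metis field_class.field_inverse norm_eq_zero)
  have "emeasure lborel ({z. z /\<^sub>R norm z \<in> {u. norm u \<noteq> 1}} \<inter> cball (0::real^'n) 1) \<le> emeasure lborel (cball (0::real^'n) 0)"
    using emeasure_mono[OF sub0, of lborel] by simp
  also have "\<dots> = 0" using emeasure_cball[of 0 "0::real^'n"] by simp
  finally have Z: "emeasure lborel ({z. z /\<^sub>R norm z \<in> {u. norm u \<noteq> 1}} \<inter> cball (0::real^'n) 1) = 0"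
    by simp
  have mb: "{u::real^'n. norm u \<noteq> 1} \<in> sets borel" by measurable
  show ?thesis using emeasure_unif_sphere[OF mb] unfolding Z by simp
qed


lemma unif_Xd_sets'[measurable_cong]: "sets (unif_Xd :: 'n::finite point measure) = sets (borel \<Otimes>\<^sub>M borel)"
  unfolding unif_Xd_def by (rule sets_pair_measure_cong[OF unif_sphere_sets unif_sphere_sets])

lemma unif_Xd_sets: "sets (unif_Xd :: 'n::finite point measure) = sets borel"
  unfolding unif_Xd_sets' by (metis borel_prod[where 'a="real^'n" and 'b="real^'n"])

lemma unif_Xd2_sets: "sets ((unif_Xd :: 'n::finite point measure) \<Otimes>\<^sub>M (unif_Xd :: 'n point measure)) = sets ((borel \<Otimes>\<^sub>M borel) \<Otimes>\<^sub>M (borel \<Otimes>\<^sub>M borel))"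
  by (rule sets_pair_measure_cong[OF unif_Xd_sets' unif_Xd_sets'])

lemma unif_Xd_space[simp]: "space (unif_Xd :: 'n::finite point measure) = UNIV"
  using sets_eq_imp_space_eq[OF unif_Xd_sets] by simp

lemma prob_space_unif_Xd: "prob_space (unif_Xd :: 'n::finite point measure)"
  unfolding unif_Xd_def by (intro prob_space_pair prob_space_unif_sphere)

lemma unif_Xd_times:
  fixes A B :: "(real^'n::finite) set"
  assumes "A \<in> sets borel" "B \<in> sets borel"
  shows "emeasure (unif_Xd :: 'n point measure) (A \<times> B) = emeasure unif_sphere A * emeasure unif_sphere B"
proof -
  interpret S: prob_space "unif_sphere :: (real^'n) measure" by (rule prob_space_unif_sphere)
  show ?thesis unfolding unif_Xd_def
    by (rule S.emeasure_pair_measure_Times) (use assms in auto)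
qed

lemma unif_Xd_null: "emeasure (unif_Xd :: 'n::finite point measure) (- Xd) = 0"
proof -
  interpret S: prob_space "unif_sphere :: (real^'n) measure" by (rule prob_space_unif_sphere)
  have mb: "{u::real^'n. norm u \<noteq> 1} \<in> sets borel" by measurable
  have sub: "- Xd \<subseteq> {u::real^'n. norm u \<noteq> 1} \<times> UNIV \<union> UNIV \<times> {u::real^'n. norm u \<noteq> 1}"
    unfolding Xd_def by auto
  have "emeasure (unif_Xd :: 'n point measure) (- Xd) \<le> emeasure unif_Xd ({u::real^'n. norm u \<noteq> 1} \<times> UNIV \<union> UNIV \<times> {u::real^'n. norm u \<noteq> 1})"
    by (rule emeasure_mono[OF sub]) (use mb in \<open>auto simp: unif_Xd_sets'\<close>)
  also have "\<dots> \<le> emeasure unif_Xd ({u::real^'n. norm u \<noteq> 1} \<times> UNIV) + emeasure unif_Xd (UNIV \<times> {u::real^'n. norm u \<noteq> 1})"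
    by (rule emeasure_subadditive) (use mb in \<open>auto simp: unif_Xd_sets'\<close>)
  also have "\<dots> = 0"
    using mb by (simp add: unif_Xd_times unif_sphere_null)
  finally show ?thesis by simp
qed

lemma pair_cap:
  assumes r: "0 < r" "r < 1"
  shows "emeasure ((unif_Xd :: 'n::finite point measure) \<Otimes>\<^sub>M (unif_Xd :: 'n point measure)) {p. dist (fst (fst p)) (fst (snd p)) < r}
     \<le> ennreal (2 ^ CARD('n) * r ^ (CARD('n) - 1))"
proof -
  interpret X: prob_space "unif_Xd :: 'n point measure" by (rule prob_space_unif_Xd)
  interpret S: prob_space "unif_sphere :: (real^'n) measure" by (rule prob_space_unif_sphere)
  have mset: "{p. dist (fst (fst p)) (fst (snd p)) < r} \<in> sets ((unif_Xd :: 'n point measure) \<Otimes>\<^sub>M (unif_Xd :: 'n point measure))"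
  proof -
    have "{p \<in> space ((borel \<Otimes>\<^sub>M borel) \<Otimes>\<^sub>M (borel \<Otimes>\<^sub>M borel)). dist (fst (fst p)) (fst (snd p)) < r} \<in> sets ((borel \<Otimes>\<^sub>M borel) \<Otimes>\<^sub>M ((borel :: (real^'n) measure) \<Otimes>\<^sub>M (borel :: (real^'n) measure)))"
      by measurable
    then show ?thesis unfolding unif_Xd2_sets by (simp add: space_pair_measure)
  qed
  have "emeasure ((unif_Xd :: 'n point measure) \<Otimes>\<^sub>M (unif_Xd :: 'n point measure)) {p. dist (fst (fst p)) (fst (snd p)) < r}
      = (\<integral>\<^sup>+a. emeasure unif_Xd (Pair a -` {p. dist (fst (fst p)) (fst (snd p)) < r}) \<partial>(unif_Xd :: 'n point measure))"
    using X.emeasure_pair_measure_alt[OF mset] by simp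
  also have "\<dots> \<le> (\<integral>\<^sup>+a. ennreal (2 ^ CARD('n) * r ^ (CARD('n) - 1)) \<partial>(unif_Xd :: 'n point measure))"
  proof (rule nn_integral_mono)
    fix a :: "'n point"
    have eqa: "Pair a -` {p. dist (fst (fst p)) (fst (snd p)) < r} = ball (fst a) r \<times> (UNIV :: (real^'n) set)"
      by auto
    have "emeasure unif_Xd (Pair a -` {p. dist (fst (fst p)) (fst (snd p)) < r}) = emeasure unif_sphere (ball (fst a) r)"
      unfolding eqa using unif_Xd_times[of "ball (fst a) r" UNIV] S.emeasure_space_1 by simp
    also have "\<dots> \<le> ennreal (2 ^ CARD('n) * r ^ (CARD('n) - 1))" by (rule cap_sphere[OF r])
    finally show "emeasure unif_Xd (Pair a -` {p. dist (fst (fst p)) (fst (snd p)) < r}) \<le> ennreal (2 ^ CARD('n) * r ^ (CARD('n) - 1))" .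
  qed
  also have "\<dots> = ennreal (2 ^ CARD('n) * r ^ (CARD('n) - 1))"
    using X.emeasure_space_1 by simp
  finally show ?thesis .
qed


lemma pair_distr:
  fixes m :: nat and i j :: nat
  assumes ij: "i < m" "j < m" "i \<noteq> j"
  defines "M \<equiv> (unif_Xd :: 'n::finite point measure)"
  shows "distr (PiM {..<m} (\<lambda>_. M)) (M \<Otimes>\<^sub>M M) (\<lambda>x. (x i, x j)) = M \<Otimes>\<^sub>M M"
proof -
  let ?I = "{..<m}"
  let ?P = "PiM ?I (\<lambda>_. M)"
  have pM: "prob_space M" unfolding M_def by (rule prob_space_unif_Xd)
  interpret P: prob_space ?P by (intro prob_space_PiM pM)
  have comp: "distr ?P M (\<lambda>x. x k) = M" if "k \<in> ?I" for k :: nat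
    using distr_PiM_component[of ?I "\<lambda>_. M" k] pM that by simp
  have rv: "P.random_variable M (\<lambda>x. x k)" for k :: nat
  proof (cases "k \<in> ?I")
    case True
    have "(\<lambda>x. x k) \<in> measurable ?P ((\<lambda>_. M) k)" by (rule measurable_component_singleton[OF True])
    then show ?thesis by simp
  next
    case False
    have "(\<lambda>_. undefined) \<in> measurable ?P M" unfolding M_def by simp
    then show ?thesis
      by (rule measurable_cong[THEN iffD1, rotated]) (use False in \<open>auto simp: space_PiM PiE_def extensional_def\<close>)
  qed
  have ind: "P.indep_vars (\<lambda>_. M) (\<lambda>k x. x k) ?I"
  proof (subst P.indep_vars_iff_distr_eq_PiM)
    show "?I \<noteq> {}" using ij by auto
    show "P.random_variable M (\<lambda>x. x k)" for k :: nat by (rule rv)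
    have "distr ?P ?P (\<lambda>x. \<lambda>k\<in>?I. x k) = distr ?P ?P (\<lambda>x. x)"
      by (rule distr_cong) (auto simp: space_PiM PiE_def extensional_def restrict_def)
    also have "\<dots> = ?P" by (rule distr_id)
    also have "\<dots> = PiM ?I (\<lambda>k. distr ?P M (\<lambda>x. x k))"
      by (rule PiM_cong) (auto simp: comp)
    finally show "distr ?P ?P (\<lambda>x. \<lambda>k\<in>?I. x k) = PiM ?I (\<lambda>k. distr ?P M (\<lambda>x. x k))" .
  qed
  have iv: "P.indep_var (PiM {i} (\<lambda>_. M)) (\<lambda>\<omega>. restrict (\<lambda>k. \<omega> k) {i}) (PiM {j} (\<lambda>_. M)) (\<lambda>\<omega>. restrict (\<lambda>k. \<omega> k) {j})"
    by (rule P.indep_var_restrict[OF ind]) (use ij in auto)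
  have iv2: "P.indep_var M ((\<lambda>f. f i) \<circ> (\<lambda>\<omega>. restrict (\<lambda>k. \<omega> k) {i})) M ((\<lambda>f. f j) \<circ> (\<lambda>\<omega>. restrict (\<lambda>k. \<omega> k) {j}))"
    by (rule P.indep_var_compose[OF iv]) (auto intro: measurable_component_singleton[of _ _ "\<lambda>_. M", simplified])
  have e1: "(\<lambda>f. f i) \<circ> (\<lambda>\<omega>. restrict (\<lambda>k. \<omega> k) {i}) = (\<lambda>\<omega>. \<omega> i)" by (auto simp: fun_eq_iff)
  have e2: "(\<lambda>f. f j) \<circ> (\<lambda>\<omega>. restrict (\<lambda>k. \<omega> k) {j}) = (\<lambda>\<omega>. \<omega> j)" by (auto simp: fun_eq_iff)
  have iv3: "P.indep_var M (\<lambda>\<omega>. \<omega> i) M (\<lambda>\<omega>. \<omega> j)" using iv2 unfolding e1 e2 .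
  then have "distr ?P M (\<lambda>\<omega>. \<omega> i) \<Otimes>\<^sub>M distr ?P M (\<lambda>\<omega>. \<omega> j) = distr ?P (M \<Otimes>\<^sub>M M) (\<lambda>x. (x i, x j))"
    by (simp add: P.indep_var_distribution_eq)
  then show ?thesis using comp ij by simp
qed


lemma R2_le:
  fixes \<phi> :: "'n::finite params"
  assumes "\<forall>x\<in>Xd. netfun \<phi> x = f x"
  shows "R2 f \<le> param_sqnorm \<phi> / 2"
proof -
  have nn: "param_sqnorm \<psi> \<ge> 0" for \<psi> :: "'n params"
    unfolding param_sqnorm_def
    by (intro add_nonneg_nonneg sum_list_nonneg) (auto split: prod.splits)
  have "param_sqnorm \<phi> / 2 \<in> {param_sqnorm \<psi> / 2 | \<psi>. \<forall>x\<in>Xd. netfun \<psi> x = f x}"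
    using assms by blast
  moreover have "bdd_below {param_sqnorm \<psi> / 2 | \<psi>. \<forall>x\<in>Xd. netfun \<psi> x = f x}"
    by (rule bdd_belowI[of _ 0]) (use nn in fastforce)
  ultimately show ?thesis unfolding R2_def by (rule cInf_lower)
qed

lemma inner_Pair0: "(a, 0::real^'n::finite) \<bullet> x = a \<bullet> fst x"
  by (cases x) (simp add: inner_Pair)

lemma interp:
  fixes p :: "nat \<Rightarrow> 'n::finite point" and y :: "nat \<Rightarrow> real" and m :: nat
  assumes pX: "\<forall>k<m. p k \<in> Xd" and y1: "\<forall>k<m. \<bar>y k\<bar> \<le> 1" and r: "0 < r" "r \<le> 1"
    and sep: "\<forall>i<m. \<forall>j<m. i \<noteq> j \<longrightarrow> dist (fst (p i)) (fst (p j)) \<ge> r"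
  shows "\<exists>fh\<in>N2. (\<forall>i<m. fh (p i) = y i) \<and> R2 fh \<le> 3 * m / r^2"
proof -
  define \<eta> where "\<eta> = r^2 / 2"
  have \<eta>: "0 < \<eta>" "\<eta> \<le> 1/2" using r unfolding \<eta>_def by (auto simp: power_le_one)
  define s where "s = 1 / sqrt \<eta>"
  have s: "s > 0" "s * s = 1 / \<eta>" "s * sqrt \<eta> = 1" using \<eta> unfolding s_def by auto
  define g where "g k = (y k / sqrt \<eta>, (s *\<^sub>R fst (p k), 0::real^'n), - s * (1 - \<eta>))" for k
  define \<phi> :: "'n params" where "\<phi> = (map g [0..<m], 0)"
  have nf: "netfun \<phi> x = (\<Sum>k\<in>{..<m}. y k / sqrt \<eta> * relu (s * (fst (p k) \<bullet> fst x) - s * (1 - \<eta>)))" for x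
    unfolding netfun_def \<phi>_def g_def
    by (simp add: interv_sum_list_conv_sum_set_nat o_def inner_Pair0 atLeast0LessThan)
  have inner1: "fst (p k) \<bullet> fst (p k) = 1" if "k < m" for k
    using pX that unfolding Xd_def by (auto simp: power2_norm_eq_inner[symmetric])
  have inner2: "fst (p k) \<bullet> fst (p j) \<le> 1 - \<eta>" if "k < m" "j < m" "k \<noteq> j" for k j
  proof -
    have "fst (p k) \<bullet> fst (p j) = ((norm (fst (p k)))^2 + (norm (fst (p j)))^2 - (norm (fst (p k) - fst (p j)))^2) / 2"
      by (metis dot_norm_neg)
    also have "\<dots> = (2 - (dist (fst (p k)) (fst (p j)))^2) / 2"
    proof -
      have "p k \<in> Xd" "p j \<in> Xd" using pX that by auto
      then have "norm (fst (p k)) = 1" "norm (fst (p j)) = 1" unfolding Xd_def by auto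
      then show ?thesis by (simp add: dist_norm)
    qed
    also have "\<dots> \<le> (2 - r^2) / 2"
      using sep that r by (auto intro!: power_mono)
    finally show ?thesis unfolding \<eta>_def by simp
  qed
  have interp: "netfun \<phi> (p j) = y j" if j: "j < m" for j
  proof -
    have z: "y k / sqrt \<eta> * relu (s * (fst (p k) \<bullet> fst (p j)) - s * (1 - \<eta>)) = 0" if "k \<in> {..<m} - {j}" for k
    proof -
      have "s * (fst (p k) \<bullet> fst (p j)) \<le> s * (1 - \<eta>)"
        using inner2[of k j] that j s by (intro mult_left_mono) auto
      then show ?thesis by (simp add: relu_def)
    qed
    have "netfun \<phi> (p j) = y j / sqrt \<eta> * relu (s * (fst (p j) \<bullet> fst (p j)) - s * (1 - \<eta>))
        + (\<Sum>k\<in>{..<m} - {j}. y k / sqrt \<eta> * relu (s * (fst (p k) \<bullet> fst (p j)) - s * (1 - \<eta>)))"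
      unfolding nf using j by (subst sum.remove[of _ j]) auto
    also have "\<dots> = y j / sqrt \<eta> * relu (s * \<eta>)"
    proof -
      have S0: "(\<Sum>k\<in>{..<m} - {j}. y k / sqrt \<eta> * relu (s * (fst (p k) \<bullet> fst (p j)) - s * (1 - \<eta>))) = 0"
        by (intro sum.neutral ballI z)
      show ?thesis unfolding S0 using inner1[OF j] by (simp add: algebra_simps)
    qed
    also have "\<dots> = y j * (s * sqrt \<eta>)"
    proof -
      have "\<eta> * s = sqrt \<eta> * (s * sqrt \<eta>)" using \<eta> by (simp add: algebra_simps)
      then have "\<eta> * s = sqrt \<eta>" using s by simp
      then show ?thesis using s \<eta> by (simp add: relu_def field_simps)
    qed
    finally show ?thesis using s by simp
  qed
  have cost: "param_sqnorm \<phi> \<le> real m * (3 / \<eta>)"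
  proof -
    have "param_sqnorm \<phi> = (\<Sum>k\<in>{..<m}. (y k / sqrt \<eta>)^2 + (norm (s *\<^sub>R fst (p k), 0::real^'n))^2 + (s * (1 - \<eta>))^2)"
      unfolding param_sqnorm_def \<phi>_def g_def
      by (simp add: interv_sum_list_conv_sum_set_nat o_def atLeast0LessThan)
    also have "\<dots> \<le> (\<Sum>k\<in>{..<m}. 3 / \<eta>)"
    proof (rule sum_mono)
      fix k assume k: "k \<in> {..<m}"
      have a: "(y k / sqrt \<eta>)^2 \<le> 1 / \<eta>"
        using y1 k \<eta> by (auto simp: power_divide abs_le_square_iff[symmetric] divide_right_mono
             intro!: divide_right_mono abs_square_le_1[THEN iffD2])
      have b: "(norm (s *\<^sub>R fst (p k), 0::real^'n))^2 = 1 / \<eta>"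
        using pX k s unfolding Xd_def by (auto simp: power2_eq_square)
      have "(s * (1 - \<eta>))^2 = (s * s) * ((1 - \<eta>) * (1 - \<eta>))" by (simp add: power2_eq_square)
      also have "\<dots> \<le> (s * s) * 1"
        using \<eta> by (intro mult_left_mono) (auto simp: mult_le_one)
      finally have c: "(s * (1 - \<eta>))^2 \<le> 1 / \<eta>" using s by simp
      show "(y k / sqrt \<eta>)^2 + (norm (s *\<^sub>R fst (p k), 0::real^'n))^2 + (s * (1 - \<eta>))^2 \<le> 3 / \<eta>"
        using a b c by simp
    qed
    finally show ?thesis by simp
  qed
  have "R2 (netfun \<phi>) \<le> param_sqnorm \<phi> / 2" by (rule R2_le) simp
  also have "\<dots> \<le> real m * (3 / \<eta>) / 2" using cost by (intro divide_right_mono) auto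
  also have "\<dots> = 3 * m / r^2" unfolding \<eta>_def using r by (simp add: field_simps)
  finally have "R2 (netfun \<phi>) \<le> 3 * m / r^2" .
  moreover have "netfun \<phi> \<in> N2" unfolding N2_def by (metis (mono_tags) mem_Collect_eq surj_pair)
  ultimately show ?thesis using interp by blast
qed


lemma mset_pair: "{p. dist (fst (fst p)) (fst (snd p)) < r} \<in> sets ((unif_Xd :: 'n::finite point measure) \<Otimes>\<^sub>M (unif_Xd :: 'n point measure))"
proof -
  have "{p \<in> space ((borel \<Otimes>\<^sub>M borel) \<Otimes>\<^sub>M (borel \<Otimes>\<^sub>M borel)). dist (fst (fst p)) (fst (snd p)) < r} \<in> sets ((borel \<Otimes>\<^sub>M borel) \<Otimes>\<^sub>M ((borel :: (real^'n) measure) \<Otimes>\<^sub>M (borel :: (real^'n) measure)))"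
    by measurable
  then show ?thesis unfolding unif_Xd2_sets by (simp add: space_pair_measure)
qed

lemma event_pair:
  fixes m :: nat
  assumes ij: "i < m" "j < m" "i \<noteq> j" and r: "0 < r" "r < 1"
  shows "emeasure (PiM {..<m} (\<lambda>_. unif_Xd :: 'n::finite point measure)) {x \<in> space (PiM {..<m} (\<lambda>_. unif_Xd :: 'n point measure)). dist (fst (x i)) (fst (x j)) < r}
     \<le> ennreal (2 ^ CARD('n) * r ^ (CARD('n) - 1))"
proof -
  let ?M = "unif_Xd :: 'n point measure"
  let ?P = "PiM {..<m} (\<lambda>_. ?M)"
  let ?S = "{p. dist (fst (fst p)) (fst (snd p)) < r} :: ('n point \<times> 'n point) set"
  have mf: "(\<lambda>x. (x i, x j)) \<in> measurable ?P (?M \<Otimes>\<^sub>M ?M)"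
  proof (rule measurable_Pair)
    show "(\<lambda>x. x i) \<in> measurable ?P ?M"
      using measurable_component_singleton[of i "{..<m}" "\<lambda>_. ?M"] ij by simp
    show "(\<lambda>x. x j) \<in> measurable ?P ?M"
      using measurable_component_singleton[of j "{..<m}" "\<lambda>_. ?M"] ij by simp
  qed
  have eq: "{x \<in> space ?P. dist (fst (x i)) (fst (x j)) < r} = (\<lambda>x. (x i, x j)) -` ?S \<inter> space ?P"
    by auto
  have "emeasure ?P {x \<in> space ?P. dist (fst (x i)) (fst (x j)) < r} = emeasure (distr ?P (?M \<Otimes>\<^sub>M ?M) (\<lambda>x. (x i, x j))) ?S"
    unfolding eq by (rule emeasure_distr[symmetric, OF mf mset_pair])
  also have "\<dots> = emeasure (?M \<Otimes>\<^sub>M ?M) ?S" using pair_distr[OF ij, where 'n='n] by simp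
  also have "\<dots> \<le> ennreal (2 ^ CARD('n) * r ^ (CARD('n) - 1))" by (rule pair_cap[OF r])
  finally show ?thesis .
qed

lemma event_null:
  fixes m :: nat
  assumes i: "i < m"
  shows "emeasure (PiM {..<m} (\<lambda>_. unif_Xd :: 'n::finite point measure)) {x \<in> space (PiM {..<m} (\<lambda>_. unif_Xd :: 'n point measure)). x i \<notin> Xd} = 0"
proof -
  let ?M = "unif_Xd :: 'n point measure"
  let ?P = "PiM {..<m} (\<lambda>_. ?M)"
  have mf: "(\<lambda>x. x i) \<in> measurable ?P ?M"
    using measurable_component_singleton[of i "{..<m}" "\<lambda>_. ?M"] i by simp
  have ms: "- Xd \<in> sets ?M"
  proof -
    have h1: "{x \<in> space ((borel :: (real^'n) measure) \<Otimes>\<^sub>M (borel :: (real^'n) measure)). norm (fst x) \<noteq> 1 \<or> norm (snd x) \<noteq> 1} \<in> sets (borel \<Otimes>\<^sub>M borel)"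
      by measurable
    have h2: "{x \<in> space ((borel :: (real^'n) measure) \<Otimes>\<^sub>M (borel :: (real^'n) measure)). norm (fst x) \<noteq> 1 \<or> norm (snd x) \<noteq> 1} = - Xd"
      unfolding Xd_def by (auto simp: space_pair_measure)
    show ?thesis using h1 unfolding h2 unif_Xd_sets' .
  qed
  have eq: "{x \<in> space ?P. x i \<notin> Xd} = (\<lambda>x. x i) -` (- Xd) \<inter> space ?P" by auto
  have "emeasure ?P {x \<in> space ?P. x i \<notin> Xd} = emeasure (distr ?P ?M (\<lambda>x. x i)) (- Xd)"
    unfolding eq by (rule emeasure_distr[symmetric, OF mf ms])
  also have "\<dots> = emeasure ?M (- Xd)"
    using distr_PiM_component[of "{..<m}" "\<lambda>_. ?M" i, OF prob_space_unif_Xd] i by simp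
  also have "\<dots> = 0" by (rule unif_Xd_null)
  finally show ?thesis .
qed


lemma arith_r:
  fixes d m :: nat and \<delta> :: real
  assumes d: "d \<ge> 2" and \<delta>: "0 < \<delta>" "\<delta> < 1" and m: "m \<ge> 1"
  defines "r \<equiv> (1/2) * (\<delta> / (real m)^2) powr (1 / (real d - 1))"
  shows "0 < r" "r < 1" "2 ^ d * r ^ (d - 1) = 2 * \<delta> / (real m)^2"
    "3 * real m / r^2 \<le> 16 * sqrt 2 * real m powr ((real d + 3) / (real d - 1)) * \<delta> powr (- 2 / (real d - 1))"
proof -
  define q where "q = \<delta> / (real m)^2"
  define e where "e = 1 / (real d - 1)"
  have mpos: "real m > 0" using m by simp
  have mpos: "real m > 0" using m by simp
  have m1: "(real m)^2 \<ge> 1" using m by (simp add: one_le_power)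
  have q: "0 < q" "q < 1" 
  proof -
    have "\<delta> < (real m)^2" using \<delta> m1 by linarith
    then show "0 < q" "q < 1" unfolding q_def using \<delta> mpos by (auto simp: divide_less_eq)
  qed
  have e: "e > 0" unfolding e_def using d by simp
  have r_eq: "r = (1/2) * q powr e" unfolding r_def q_def e_def by simp
  show "0 < r" unfolding r_eq using q by simp
  have "q powr e \<le> 1" using q e by (intro powr_le1) auto
  then show "r < 1" unfolding r_eq by simp
  have de: "of_nat (d - 1) * e = 1" unfolding e_def using d by (simp add: of_nat_diff)
  have "r ^ (d - 1) = (1/2) ^ (d - 1) * (q powr e) ^ (d - 1)" unfolding r_eq by (rule power_mult_distrib)
  also have "(q powr e) ^ (d - 1) = q" using q by (subst powr_power) (auto simp only: de powr_one)
  finally have "2 ^ d * r ^ (d - 1) = 2 ^ d * (1/2) ^ (d - 1) * q" by simp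
  also have "2 ^ d * (1/2::real) ^ (d - 1) = 2"
  proof -
    have "d = Suc (d - 1)" using d by simp
    then have "(2::real) ^ d = 2 * 2 ^ (d - 1)" by (metis power_Suc)
    then show ?thesis by (simp add: power_one_over)
  qed
  finally show "2 ^ d * r ^ (d - 1) = 2 * \<delta> / (real m)^2" unfolding q_def by simp
  have r2: "r^2 = (1/4) * q powr (2 * e)"
    unfolding r_eq using q by (simp add: power_mult_distrib powr_power[symmetric] power2_eq_square powr_add[symmetric])
  have "3 * real m / r^2 = 12 * real m * q powr (- (2 * e))"
    unfolding r2 using q by (simp add: powr_minus divide_simps)
  also have "q powr (- (2 * e)) = \<delta> powr (- (2 * e)) * real m powr (4 * e)"
  proof -
    have "q powr (- (2 * e)) = \<delta> powr (- (2 * e)) / ((real m)^2) powr (- (2 * e))"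
      unfolding q_def by (rule powr_divide)
    also have "((real m)^2) powr (- (2 * e)) = real m powr (- (4 * e))"
    proof -
      have "(real m)^2 = real m powr 2" using mpos by (simp add: powr_numeral)
      then have "((real m)^2) powr (- (2 * e)) = (real m powr 2) powr (- (2 * e))" by simp
      also have "\<dots> = real m powr (2 * (- (2 * e)))" by (rule powr_powr)
      finally have "((real m)^2) powr (- (2 * e)) = real m powr (2 * (- (2 * e)))" .
      then show ?thesis by simp
    qed
    finally show ?thesis using mpos by (simp add: powr_minus divide_simps)
  qed
  also have "12 * real m * (\<delta> powr (- (2 * e)) * real m powr (4 * e)) = 12 * (real m powr (1 + 4 * e)) * \<delta> powr (- (2 * e))"
    using mpos by (simp add: powr_add)
  also have "1 + 4 * e = (real d + 3) / (real d - 1)" unfolding e_def using d by (simp add: field_simps)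
  also have "- (2 * e) = - 2 / (real d - 1)" unfolding e_def by simp
  also have "12 * real m powr ((real d + 3) / (real d - 1)) * \<delta> powr (- 2 / (real d - 1))
     \<le> 16 * sqrt 2 * real m powr ((real d + 3) / (real d - 1)) * \<delta> powr (- 2 / (real d - 1))"
  proof (rule mult_right_mono[OF mult_right_mono])
    have "(12::real) \<le> 16 * 1" by simp
    also have "\<dots> \<le> 16 * sqrt 2" by simp
    finally show "(12::real) \<le> 16 * sqrt 2" .
  qed auto
  finally show "3 * real m / r^2 \<le> 16 * sqrt 2 * real m powr ((real d + 3) / (real d - 1)) * \<delta> powr (- 2 / (real d - 1))" .
qed


lemma sets_pair_event:
  fixes m :: nat
  assumes ij: "i < m" "j < m"
  shows "{x \<in> space (PiM {..<m} (\<lambda>_. unif_Xd :: 'n::finite point measure)). dist (fst (x i)) (fst (x j)) < r}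
     \<in> sets (PiM {..<m} (\<lambda>_. unif_Xd :: 'n::finite point measure))"
proof -
  let ?M = "unif_Xd :: 'n point measure"
  let ?P = "PiM {..<m} (\<lambda>_. ?M)"
  let ?S = "{p. dist (fst (fst p)) (fst (snd p)) < r} :: ('n point \<times> 'n point) set"
  have mf: "(\<lambda>x. (x i, x j)) \<in> measurable ?P (?M \<Otimes>\<^sub>M ?M)"
  proof (rule measurable_Pair)
    show "(\<lambda>x. x i) \<in> measurable ?P ?M"
      using measurable_component_singleton[of i "{..<m}" "\<lambda>_. ?M"] ij by simp
    show "(\<lambda>x. x j) \<in> measurable ?P ?M"
      using measurable_component_singleton[of j "{..<m}" "\<lambda>_. ?M"] ij by simp
  qed
  have eq: "{x \<in> space ?P. dist (fst (x i)) (fst (x j)) < r} = (\<lambda>x. (x i, x j)) -` ?S \<inter> space ?P"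
    by auto
  show ?thesis unfolding eq by (rule measurable_sets[OF mf mset_pair])
qed

lemma sets_null_event:
  fixes m :: nat
  assumes i: "i < m"
  shows "{x \<in> space (PiM {..<m} (\<lambda>_. unif_Xd :: 'n::finite point measure)). x i \<notin> Xd} \<in> sets (PiM {..<m} (\<lambda>_. unif_Xd :: 'n point measure))"
proof -
  let ?M = "unif_Xd :: 'n point measure"
  let ?P = "PiM {..<m} (\<lambda>_. ?M)"
  have mf: "(\<lambda>x. x i) \<in> measurable ?P ?M"
    using measurable_component_singleton[of i "{..<m}" "\<lambda>_. ?M"] i by simp
  have ms: "- Xd \<in> sets ?M"
  proof -
    have h1: "{x \<in> space ((borel :: (real^'n) measure) \<Otimes>\<^sub>M (borel :: (real^'n) measure)). norm (fst x) \<noteq> 1 \<or> norm (snd x) \<noteq> 1} \<in> sets (borel \<Otimes>\<^sub>M borel)"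
      by measurable
    have h2: "{x \<in> space ((borel :: (real^'n) measure) \<Otimes>\<^sub>M (borel :: (real^'n) measure)). norm (fst x) \<noteq> 1 \<or> norm (snd x) \<noteq> 1} = - Xd"
      unfolding Xd_def by (auto simp: space_pair_measure)
    show ?thesis using h1 unfolding h2 unif_Xd_sets' .
  qed
  have eq: "{x \<in> space ?P. x i \<notin> Xd} = (\<lambda>x. x i) -` (- Xd) \<inter> space ?P" by auto
  show ?thesis unfolding eq by (rule measurable_sets[OF mf ms])
qed

lemma sum_nat_real: "(\<Sum>j<m. real j) = real m * (real m - 1) / 2"
  by (induction m) (auto simp: field_simps)

theorem lemma18:
  fixes f :: "'n::finite point \<Rightarrow> real" and \<delta> :: real and m :: nat
  assumes "CARD('n) \<ge> 2"
    and "\<forall>x\<in>Xd. f x \<in> {-1..1}"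
    and "\<delta> > 0"
  shows "\<exists>A \<in> sets (PiM {..<m} (\<lambda>_. unif_Xd)).
           measure (PiM {..<m} (\<lambda>_. unif_Xd)) A \<ge> 1 - \<delta> \<and>
           (\<forall>xs\<in>A. \<exists>fh\<in>N2. (\<forall>i<m. fh (xs i) = f (xs i)) \<and>
              R2 fh \<le> 16 * sqrt 2 * real m powr ((real CARD('n) + 3) / (real CARD('n) - 1))
                         * \<delta> powr (- 2 / (real CARD('n) - 1)))"
proof -
  let ?d = "CARD('n)"
  let ?M = "unif_Xd :: 'n point measure"
  let ?P = "PiM {..<m} (\<lambda>_. ?M)"
  let ?Bd = "16 * sqrt 2 * real m powr ((real CARD('n) + 3) / (real CARD('n) - 1))
                         * \<delta> powr (- 2 / (real CARD('n) - 1))"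
  interpret P: prob_space ?P by (intro prob_space_PiM prob_space_unif_Xd)
  show ?thesis
  proof (cases "\<delta> \<ge> 1")
    case True
    show ?thesis by (rule bexI[of _ "{}"]) (use True in auto)
  next
    case False
    show ?thesis
    proof (cases "m = 0")
      case True
      define \<phi>0 :: "'n params" where "\<phi>0 = ([], 0)"
      have R0: "R2 (netfun \<phi>0) \<le> 0"
        using R2_le[of \<phi>0 "netfun \<phi>0"] by (simp add: param_sqnorm_def \<phi>0_def)
      have N0: "netfun \<phi>0 \<in> N2" unfolding N2_def by blast
      have Bd0: "?Bd = 0" using True by simp
      show ?thesis
      proof (rule bexI[of _ "space ?P"], intro conjI ballI)
        show "1 - \<delta> \<le> measure ?P (space ?P)" using assms(3) by (simp add: P.prob_space)
        fix xs assume "xs \<in> space ?P"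
        show "\<exists>fh\<in>N2. (\<forall>i<m. fh (xs i) = f (xs i)) \<and> R2 fh \<le> ?Bd"
          using N0 R0 True Bd0 by auto
      qed simp
    next
      case m0: False
      have \<delta>: "0 < \<delta>" "\<delta> < 1" using assms(3) False by auto
      have m1: "m \<ge> 1" using m0 by simp
      define r where "r = (1/2) * (\<delta> / (real m)^2) powr (1 / (real ?d - 1))"
      note ar = arith_r[OF assms(1) \<delta> m1, folded r_def]
      have r: "0 < r" "r < 1" using ar by auto
      define c where "c = 2 * \<delta> / (real m)^2"
      have c0: "c \<ge> 0" unfolding c_def using \<delta> by simp
      define B0 where "B0 i = {x \<in> space ?P. x i \<notin> Xd}" for i
      define B where "B i j = {x \<in> space ?P. dist (fst (x i)) (fst (x j)) < r}" for i j
      define U where "U = (\<Union>i\<in>{..<m}. B0 i) \<union> (\<Union>j\<in>{..<m}. \<Union>i\<in>{..<j}. B i j)"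
      have sB0: "B0 i \<in> sets ?P" if "i < m" for i
        unfolding B0_def by (rule sets_null_event[OF that])
      have sB: "B i j \<in> sets ?P" if "i < m" "j < m" for i j
        unfolding B_def by (rule sets_pair_event[OF that])
      have sU1: "(\<Union>i\<in>{..<m}. B0 i) \<in> sets ?P" using sB0 by auto
      have sU2': "(\<Union>i\<in>{..<j}. B i j) \<in> sets ?P" if "j < m" for j using sB that by auto
      have sU2: "(\<Union>j\<in>{..<m}. \<Union>i\<in>{..<j}. B i j) \<in> sets ?P" using sU2' by auto
      have sU: "U \<in> sets ?P" unfolding U_def using sU1 sU2 by auto
      have mB0: "measure ?P (B0 i) = 0" if "i < m" for i
      proof -
        have "emeasure ?P (B0 i) = 0" unfolding B0_def by (rule event_null[OF that])
        then show ?thesis by (simp add: P.emeasure_eq_measure)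
      qed
      have mB: "measure ?P (B i j) \<le> c" if "i < j" "j < m" for i j
      proof -
        have "emeasure ?P (B i j) \<le> ennreal (2 ^ ?d * r ^ (?d - 1))"
          unfolding B_def by (rule event_pair) (use that r in auto)
        then have "ennreal (measure ?P (B i j)) \<le> ennreal c"
          using ar(3) unfolding c_def by (simp add: P.emeasure_eq_measure)
        then show ?thesis using c0 by (simp add: ennreal_le_iff)
      qed
      have "measure ?P U \<le> measure ?P (\<Union>i\<in>{..<m}. B0 i) + measure ?P (\<Union>j\<in>{..<m}. \<Union>i\<in>{..<j}. B i j)"
        unfolding U_def by (rule measure_subadditive[OF sU1 sU2]) (simp_all add: P.emeasure_eq_measure)
      also have "measure ?P (\<Union>i\<in>{..<m}. B0 i) \<le> (\<Sum>i<m. measure ?P (B0 i))"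
        by (rule measure_UNION_le) (use sB0 in auto)
      also have "(\<Sum>i<m. measure ?P (B0 i)) = 0" using mB0 by simp
      also have "measure ?P (\<Union>j\<in>{..<m}. \<Union>i\<in>{..<j}. B i j) \<le> (\<Sum>j<m. measure ?P (\<Union>i\<in>{..<j}. B i j))"
        by (rule measure_UNION_le) (use sU2' in auto)
      also have "\<dots> \<le> (\<Sum>j<m. (\<Sum>i<j. measure ?P (B i j)))"
        by (intro sum_mono measure_UNION_le) (use sB in auto)
      also have "\<dots> \<le> (\<Sum>j<m. (\<Sum>i<j. c))"
        by (intro sum_mono) (use mB in auto)
      also have "\<dots> = c * (\<Sum>j<m. real j)" by (simp add: sum_distrib_left mult.commute)
      also have "\<dots> = c * (real m * (real m - 1) / 2)" by (simp add: sum_nat_real)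
      also have "\<dots> \<le> \<delta>"
      proof -
        have "c * (real m * (real m - 1) / 2) = \<delta> * ((real m - 1) / real m)"
          unfolding c_def using m1 by (simp add: field_simps power2_eq_square)
        also have "\<dots> \<le> \<delta> * 1" using m1 \<delta> by (intro mult_left_mono) auto
        finally show ?thesis by simp
      qed
      finally have mU: "measure ?P U \<le> \<delta>" by simp
      define A where "A = space ?P - U"
      have sA: "A \<in> sets ?P" unfolding A_def using sU by auto
      have mA: "measure ?P A = 1 - measure ?P U" unfolding A_def using P.prob_compl[OF sU] .
      show ?thesis
      proof (rule bexI[OF _ sA], intro conjI ballI)
        show "1 - \<delta> \<le> measure ?P A" using mA mU by simp
        fix xs assume xs: "xs \<in> A"
        have inX: "\<forall>k<m. xs k \<in> Xd"
          using xs unfolding A_def U_def B0_def by auto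
        have sep: "\<forall>i<m. \<forall>j<m. i \<noteq> j \<longrightarrow> dist (fst (xs i)) (fst (xs j)) \<ge> r"
        proof (intro allI impI)
          fix i j assume ij: "i < m" "j < m" "i \<noteq> j"
          show "dist (fst (xs i)) (fst (xs j)) \<ge> r"
          proof (cases "i < j")
            case True
            then have "xs \<notin> B i j" using xs ij unfolding A_def U_def by auto
            then show ?thesis using xs unfolding A_def B_def by auto
          next
            case False
            then have "j < i" using ij by simp
            then have "xs \<notin> B j i" using xs ij unfolding A_def U_def by auto
            then show ?thesis using xs unfolding A_def B_def by (auto simp: dist_commute)
          qed
        qed
        have y1: "\<forall>k<m. \<bar>f (xs k)\<bar> \<le> 1" using inX assms(2) by (auto simp: abs_le_iff)
        obtain fh where fh: "fh \<in> N2" "\<forall>i<m. fh (xs i) = f (xs i)" "R2 fh \<le> 3 * m / r^2"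
          using interp[OF inX y1 r(1) less_imp_le[OF r(2)] sep] by blast
        show "\<exists>fh\<in>N2. (\<forall>i<m. fh (xs i) = f (xs i)) \<and> R2 fh \<le> ?Bd"
          using fh ar(4) by (intro bexI[of _ fh]) auto
      qed
    qed
  qed
qed

end
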